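(* Let $F_2$ be the free group on $a,b$ and $T=[a,b]=aba^{-1}b^{-1}$. For every positive integer $n$, $$(ab)^n=\prod_{i=1}^{n-1}\left(\prod_{j=0}^{i-1}[a^ib^{i-1-j},T^{-1}]\,T^{-1}\right)\cdot a^nb^n$$ in $F_2$, where the products are ordered from left to right with increasing $i$ and, for fixed $i$, increasing $j$.
   Context: Commutator convention: $[x,y]=xyx^{-1}y^{-1}$. An empty product equals $1$. *)

theory Defs
  imports "HOL-Algebra.Group"
begin

definition commutator :: "('a, 'b) monoid_scheme \<Rightarrow> 'a \<Rightarrow> 'a \<Rightarrow> 'a" where
  "commutator G x y = x \<otimes>\<^bsub>G\<^esub> y \<otimes>\<^bsub>G\<^esub> inv\<^bsub>G\<^esub> x \<otimes>\<^bsub>G\<^esub> inv\<^bsub>G\<^esub> y"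

definition list_prod :: "('a, 'b) monoid_scheme \<Rightarrow> 'a list \<Rightarrow> 'a" where
  "list_prod G xs = foldr (\<lambda>x acc. x \<otimes>\<^bsub>G\<^esub> acc) xs \<one>\<^bsub>G\<^esub>"

end

theory Submission
  imports Defs
begin

context group
begin

lemma cancel1: "x \<in> carrier G \<Longrightarrow> y \<in> carrier G \<Longrightarrow> x \<otimes> (inv x \<otimes> y) = y"
  by (simp add: m_assoc[symmetric])

lemma cancel2: "x \<in> carrier G \<Longrightarrow> y \<in> carrier G \<Longrightarrow> inv x \<otimes> (x \<otimes> y) = y"
  by (simp add: m_assoc[symmetric])

lemma list_prod_closed: "set xs \<subseteq> carrier G \<Longrightarrow> list_prod G xs \<in> carrier G"
  by (induction xs) (auto simp: list_prod_def)

lemma list_prod_append: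
  assumes "set xs \<subseteq> carrier G" "set ys \<subseteq> carrier G"
  shows "list_prod G (xs @ ys) = list_prod G xs \<otimes> list_prod G ys"
  using assms
proof (induction xs)
  case Nil
  have "list_prod G ys \<in> carrier G" using Nil(2)
    by (induction ys) (auto simp: list_prod_def)
  then show ?case by (simp add: list_prod_def)
next
  case (Cons x xs)
  have c1: "list_prod G xs \<in> carrier G" using Cons(2)
    by (induction xs) (auto simp: list_prod_def)
  have c2: "list_prod G ys \<in> carrier G" using Cons(3)
    by (induction ys) (auto simp: list_prod_def)
  show ?case using Cons c1 c2 by (simp add: list_prod_def m_assoc)
qed

lemma inner:
  assumes a: "a \<in> carrier G" and b: "b \<in> carrier G" and x: "x \<in> carrier G"
  shows "list_prod G (map (\<lambda>j.
        commutator G (x \<otimes> b [^] (m - 1 - j)) (inv (commutator G a b))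
        \<otimes> inv (commutator G a b)) [0..<m])
     = x \<otimes> b [^] m \<otimes> a \<otimes> inv (b [^] m) \<otimes> inv a \<otimes> inv x"
proof (induction m)
  case 0
  then show ?case using a x by (simp add: list_prod_def m_assoc)
next
  case (Suc m)
  have e: "[0..<Suc m] = 0 # map Suc [0..<m]" by (simp add: upt_conv_Cons map_Suc_upt)
  have e2: "map (\<lambda>j. commutator G (x \<otimes> b [^] (Suc m - 1 - j)) (inv (commutator G a b))
        \<otimes> inv (commutator G a b)) (0 # map Suc [0..<m])
    = (commutator G (x \<otimes> b [^] m) (inv (commutator G a b)) \<otimes> inv (commutator G a b)) #
      map (\<lambda>j. commutator G (x \<otimes> b [^] (m - 1 - j)) (inv (commutator G a b))
        \<otimes> inv (commutator G a b)) [0..<m]"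
    by simp
  have "list_prod G (map (\<lambda>j.
        commutator G (x \<otimes> b [^] (Suc m - 1 - j)) (inv (commutator G a b))
        \<otimes> inv (commutator G a b)) [0..<Suc m])
     = (commutator G (x \<otimes> b [^] m) (inv (commutator G a b)) \<otimes> inv (commutator G a b))
       \<otimes> (x \<otimes> b [^] m \<otimes> a \<otimes> inv (b [^] m) \<otimes> inv a \<otimes> inv x)"
    unfolding e e2 using Suc by (simp add: list_prod_def)
  also have "\<dots> = x \<otimes> b [^] Suc m \<otimes> a \<otimes> inv (b [^] Suc m) \<otimes> inv a \<otimes> inv x"
    using a b x
    by (simp add: commutator_def m_assoc inv_mult_group cancel1 cancel2)
  finally show ?case .
qed

end

theorem lemma2p13:
  fixes G (structure) and a b :: 'a and n :: nat
  assumes "group G" and "a \<in> carrier G" and "b \<in> carrier G" and "n \<ge> 1"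
  shows "(a \<otimes> b) [^] n =
    list_prod G (map (\<lambda>i. list_prod G (map (\<lambda>j.
        commutator G (a [^] i \<otimes> b [^] (i - 1 - j)) (inv (commutator G a b))
        \<otimes> inv (commutator G a b)) [0..<i])) [1..<n])
    \<otimes> a [^] n \<otimes> b [^] n"
proof -
  interpret group G by fact
  note a = assms(2) and b = assms(3)
  define P where "P i = a [^] i \<otimes> b [^] i \<otimes> a \<otimes> inv (b [^] i) \<otimes> inv a \<otimes> inv (a [^] i)" for i :: nat
  have PC: "P i \<in> carrier G" for i using a b by (simp add: P_def)
  have mp: "map (\<lambda>i. list_prod G (map (\<lambda>j.
        commutator G (a [^] i \<otimes> b [^] (i - 1 - j)) (inv (commutator G a b))
        \<otimes> inv (commutator G a b)) [0..<i])) xs = map P xs" for xs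
    using inner[OF a b nat_pow_closed[OF a]] by (simp add: P_def)
  have "(a \<otimes> b) [^] n = list_prod G (map P [1..<n]) \<otimes> a [^] n \<otimes> b [^] n"
    using assms(4)
  proof (induction n rule: nat_induct_at_least)
    case base
    then show ?case using a b by (simp add: list_prod_def)
  next
    case (Suc n)
    have QC: "list_prod G (map P [1..<n]) \<in> carrier G"
      by (rule list_prod_closed) (auto simp: PC)
    have "list_prod G (map P [1..<Suc n]) = list_prod G (map P [1..<n]) \<otimes> P n"
    proof -
      have "[1..<Suc n] = [1..<n] @ [n]" using Suc(1) by simp
      then have "list_prod G (map P [1..<Suc n]) = list_prod G (map P [1..<n] @ [P n])" by simp
      also have "\<dots> = list_prod G (map P [1..<n]) \<otimes> list_prod G [P n]"
        by (rule list_prod_append) (auto simp: PC)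
      finally show ?thesis using PC by (simp add: list_prod_def)
    qed
    then have "list_prod G (map P [1..<Suc n]) \<otimes> a [^] Suc n \<otimes> b [^] Suc n
      = list_prod G (map P [1..<n]) \<otimes> (P n \<otimes> (a [^] n \<otimes> a) \<otimes> (b [^] n \<otimes> b))"
      using a b QC PC by (simp add: m_assoc)
    also have "P n \<otimes> (a [^] n \<otimes> a) \<otimes> (b [^] n \<otimes> b) = a [^] n \<otimes> b [^] n \<otimes> a \<otimes> b"
      using a b by (simp add: P_def m_assoc cancel1 cancel2)
    finally show ?case using Suc(2) a b QC by (simp add: m_assoc)
  qed
  then show ?thesis unfolding mp .
qed

end
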